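(* For every $k\in\mathbb{N}$, $k\ge 2$, there exists a family of $k$-uniform hypergraph properties $f_v$ on $v$ vertices such that $s(f_v)=\Theta(v^{\lceil k/2\rceil})$ and $bs(f_v)=\Theta(v^k)$. In particular, for even $k$, $bs(f_v)=\Theta(s(f_v)^2)$.
   Context: A $k$-uniform hypergraph on $[v]$ is identified with a string in $\{0,1\}^{\binom vk}$. A $k$-uniform hypergraph property is a Boolean function on such strings invariant under all permutations of $[v]$. $s(f)$ is the maximum over inputs of the number of single-bit flips changing the value; $bs(f)$ is the maximum over inputs $x$ of the maximum number of pairwise disjoint sets of coordinates whose simultaneous flip changes $f(x)$. *)

theory Defs
  imports Main "HOL-Library.Landau_Symbols" "HOL-Combinatorics.Permutations"
begin

text \<open>An input string in {0,1}^(v choose k) is identified with the set of coordinates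
  equal to 1, i.e. a set E of k-subsets of [v] (the hyperedges).\<close>

definition hedges :: "nat \<Rightarrow> nat \<Rightarrow> nat set set" where
  "hedges k v = {S. S \<subseteq> {0..<v} \<and> card S = k}"

definition hinputs :: "nat \<Rightarrow> nat \<Rightarrow> nat set set set" where
  "hinputs k v = Pow (hedges k v)"

definition hyper_property :: "nat \<Rightarrow> nat \<Rightarrow> (nat set set \<Rightarrow> bool) \<Rightarrow> bool" where
  "hyper_property k v f \<longleftrightarrow>
     (\<forall>(\<sigma>::nat \<Rightarrow> nat) E. \<sigma> permutes {0..<v} \<and> E \<in> hinputs k v \<longrightarrow> f ((\<lambda>S. \<sigma> ` S) ` E) = f E)"

definition flip :: "nat set set \<Rightarrow> nat set set \<Rightarrow> nat set set" where
  "flip E B = (E - B) \<union> (B - E)"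

definition sensitivity :: "nat \<Rightarrow> nat \<Rightarrow> (nat set set \<Rightarrow> bool) \<Rightarrow> nat" where
  "sensitivity k v f =
     Max ((\<lambda>E. card {e \<in> hedges k v. f (flip E {e}) \<noteq> f E}) ` hinputs k v)"

definition block_sensitivity :: "nat \<Rightarrow> nat \<Rightarrow> (nat set set \<Rightarrow> bool) \<Rightarrow> nat" where
  "block_sensitivity k v f =
     Max {card \<B> | E \<B>. E \<in> hinputs k v \<and> \<B> \<subseteq> Pow (hedges k v) \<and>
            pairwise disjnt \<B> \<and> (\<forall>B\<in>\<B>. f (flip E B) \<noteq> f E)}"

end

theory Submission
  imports Defs
begin


definition good :: "nat \<Rightarrow> nat \<Rightarrow> nat set \<Rightarrow> nat set set \<Rightarrow> bool" where
  "good k v W E \<longleftrightarrow> W \<subseteq> {0..<v} \<and> card W = Suc k \<and>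
     (\<forall>e. e \<subseteq> W \<and> card e = k \<longrightarrow> e \<in> E) \<and>
     (\<forall>e\<in>E. k div 2 \<le> card (e \<inter> W) \<longrightarrow> e \<subseteq> W)"

definition fam :: "nat \<Rightarrow> nat \<Rightarrow> nat set set \<Rightarrow> bool" where
  "fam k v E \<longleftrightarrow> (\<exists>W. good k v W E)"

lemma good_perm:
  assumes g: "good k v W E" and p: "\<sigma> permutes {0..<v}"
  shows "good k v (\<sigma> ` W) ((\<lambda>S. \<sigma> ` S) ` E)"
proof -
  have inj: "inj \<sigma>" using p permutes_inj by blast
  have bij: "bij \<sigma>" using p permutes_bij by blast
  have W: "W \<subseteq> {0..<v}" "card W = Suc k" using g unfolding good_def by auto
  have 1: "\<sigma> ` W \<subseteq> {0..<v}" using W(1) p permutes_image by blast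
  have 2: "card (\<sigma> ` W) = Suc k" using W(2) inj by (simp add: card_image inj_on_subset)
  have 3: "e \<in> (\<lambda>S. \<sigma> ` S) ` E" if "e \<subseteq> \<sigma> ` W" "card e = k" for e
  proof -
    let ?e = "inv \<sigma> ` e"
    have "?e \<subseteq> W" using that(1) inj by (auto simp: inv_f_f)
    moreover have "card ?e = k" using that(2) bij
      by (metis bij_imp_bij_inv bij_is_inj card_image inj_on_subset subset_UNIV)
    ultimately have "?e \<in> E" using g unfolding good_def by auto
    moreover have "\<sigma> ` ?e = e" using bij by (simp add: image_comp bij_is_surj surj_f_inv_f)
    ultimately show ?thesis by (metis image_eqI)
  qed
  have 4: "\<sigma> ` e' \<subseteq> \<sigma> ` W" if "e' \<in> E" "k div 2 \<le> card (\<sigma> ` e' \<inter> \<sigma> ` W)" for e'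
  proof -
    have "\<sigma> ` e' \<inter> \<sigma> ` W = \<sigma> ` (e' \<inter> W)" using inj by (simp add: image_Int)
    hence "card (\<sigma> ` e' \<inter> \<sigma> ` W) = card (e' \<inter> W)" using inj by (simp add: card_image inj_on_subset)
    hence "e' \<subseteq> W" using g that unfolding good_def by auto
    thus ?thesis by auto
  qed
  show ?thesis unfolding good_def using 1 2 3 4 by blast
qed

lemma fam_perm: "\<sigma> permutes {0..<v} \<Longrightarrow> fam k v ((\<lambda>S. \<sigma> ` S) ` E) = fam k v E"
proof
  assume p: "\<sigma> permutes {0..<v}"
  assume "fam k v ((\<lambda>S. \<sigma> ` S) ` E)"
  then obtain W where "good k v W ((\<lambda>S. \<sigma> ` S) ` E)" unfolding fam_def by blast
  from good_perm[OF this permutes_inv[OF p]]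
  have "good k v (inv \<sigma> ` W) ((\<lambda>S. inv \<sigma> ` S) ` (\<lambda>S. \<sigma> ` S) ` E)" .
  moreover have "(\<lambda>S. inv \<sigma> ` S) ` (\<lambda>S. \<sigma> ` S) ` E = E"
  proof -
    have "inv \<sigma> ` \<sigma> ` S = S" for S using permutes_inj[OF p]
      by (simp add: image_comp inv_f_f)
    thus ?thesis by (simp add: image_comp o_def)
  qed
  ultimately show "fam k v E" unfolding fam_def by auto
next
  assume "\<sigma> permutes {0..<v}" "fam k v E"
  thus "fam k v ((\<lambda>S. \<sigma> ` S) ` E)" unfolding fam_def using good_perm by blast
qed

lemma hp: "hyper_property k v (fam k v)"
  unfolding hyper_property_def using fam_perm by blast



lemma flip1: "x \<in> flip E {e} \<longleftrightarrow> (x \<in> E \<longleftrightarrow> x \<noteq> e)"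
  unfolding flip_def by auto

lemma good_local:
  assumes "\<And>e. k div 2 \<le> card (e \<inter> W) \<Longrightarrow> (e \<in> E \<longleftrightarrow> e \<in> E')" and "good k v W E"
  shows "good k v W E'"
proof -
  have "e \<in> E'" if "e \<subseteq> W" "card e = k" for e
  proof -
    have "e \<inter> W = e" using that by auto
    hence "k div 2 \<le> card (e \<inter> W)" using that by simp
    thus ?thesis using assms that unfolding good_def by blast
  qed
  moreover have "e \<subseteq> W" if "e \<in> E'" "k div 2 \<le> card (e \<inter> W)" for e
    using assms that unfolding good_def by blast
  ultimately show ?thesis using assms(2) unfolding good_def by blast
qed

lemma finite_hedges: "finite (hedges k v)"
  unfolding hedges_def by (rule finite_subset[of _ "Pow {0..<v}"]) auto

lemma card_contain:
  assumes T: "finite T"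
  shows "card {e \<in> hedges k v. T \<subseteq> e} \<le> v choose (k - card T)"
proof -
  have "inj_on (\<lambda>e. e - T) {e \<in> hedges k v. T \<subseteq> e}"
    by (rule inj_onI) auto
  moreover have "(\<lambda>e. e - T) ` {e \<in> hedges k v. T \<subseteq> e} \<subseteq> {R. R \<subseteq> {0..<v} \<and> card R = k - card T}"
    unfolding hedges_def using T by (auto simp: card_Diff_subset)
  ultimately have "card {e \<in> hedges k v. T \<subseteq> e} \<le> card {R. R \<subseteq> {0..<v} \<and> card R = k - card T}"
    by (intro card_inj_on_le) auto
  also have "\<dots> = v choose (k - card T)" by (simp add: n_subsets)
  finally show ?thesis .
qed

lemma card_N:
  assumes W: "finite W"
  shows "card {e \<in> hedges k v. t \<le> card (e \<inter> W)} \<le> (card W choose t) * (v choose (k - t))"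
proof -
  let ?Ts = "{T. T \<subseteq> W \<and> card T = t}"
  have sub: "{e \<in> hedges k v. t \<le> card (e \<inter> W)} \<subseteq> (\<Union>T\<in>?Ts. {e \<in> hedges k v. T \<subseteq> e})"
  proof
    fix e assume e: "e \<in> {e \<in> hedges k v. t \<le> card (e \<inter> W)}"
    have "t \<le> card (e \<inter> W)" using e by simp
    then obtain T where "T \<subseteq> e \<inter> W" "card T = t"
      by (meson obtain_subset_with_card_n)
    thus "e \<in> (\<Union>T\<in>?Ts. {e \<in> hedges k v. T \<subseteq> e})" using e by blast
  qed
  have fin: "finite ?Ts" using W by simp
  have "card {e \<in> hedges k v. t \<le> card (e \<inter> W)} \<le> card (\<Union>T\<in>?Ts. {e \<in> hedges k v. T \<subseteq> e})"
    by (rule card_mono[OF finite_subset[OF _ finite_hedges] sub]) blast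
  also have "\<dots> \<le> (\<Sum>T\<in>?Ts. card {e \<in> hedges k v. T \<subseteq> e})" by (rule card_UN_le[OF fin])
  also have "\<dots> \<le> (\<Sum>T\<in>?Ts. v choose (k - t))"
  proof (rule sum_mono)
    fix T assume "T \<in> ?Ts"
    hence "finite T" "card T = t" using W finite_subset by auto
    thus "card {e \<in> hedges k v. T \<subseteq> e} \<le> v choose (k - t)" using card_contain by metis
  qed
  also have "\<dots> = (card W choose t) * (v choose (k - t))" using W by (simp add: n_subsets)
  finally show ?thesis .
qed

lemma sens_one:
  assumes g: "good k v W E"
  shows "{e \<in> hedges k v. fam k v (flip E {e}) \<noteq> fam k v E}
           \<subseteq> {e \<in> hedges k v. k div 2 \<le> card (e \<inter> W)}"
proof
  fix e assume "e \<in> {e \<in> hedges k v. fam k v (flip E {e}) \<noteq> fam k v E}"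
  hence e: "e \<in> hedges k v" "fam k v (flip E {e}) \<noteq> fam k v E" by auto
  have "k div 2 \<le> card (e \<inter> W)"
  proof (rule ccontr)
    assume "\<not> ?thesis"
    hence "good k v W (flip E {e})"
      by (intro good_local[OF _ g]) (auto simp: flip1)
    thus False using e g unfolding fam_def by blast
  qed
  thus "e \<in> {e \<in> hedges k v. k div 2 \<le> card (e \<inter> W)}" using e by auto
qed



lemma good_ksub: "good k v W E \<Longrightarrow> e \<subseteq> W \<Longrightarrow> card e = k \<Longrightarrow> e \<in> E"
  unfolding good_def by blast

lemma good_viol: "good k v W E \<Longrightarrow> e \<in> E \<Longrightarrow> k div 2 \<le> card (e \<inter> W) \<Longrightarrow> e \<subseteq> W"
  unfolding good_def by blast

lemma A_bound:
  assumes nf: "\<not> fam k v E" and W: "card W = Suc k"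
  shows "card {e \<in> hedges k v. good k v W (flip E {e})} \<le> k + 2"
proof -
  let ?A = "{e \<in> hedges k v. good k v W (flip E {e})}"
  let ?K = "{e. e \<subseteq> W \<and> card e = k}"
  have finW: "finite W" using W card_ge_0_finite by force
  have fA: "finite ?A" using finite_hedges by simp
  have key: "e \<in> E \<and> k div 2 \<le> card (e \<inter> W)" if "e \<in> ?A" "\<not> e \<subseteq> W" for e
  proof -
    have g: "good k v W (flip E {e})" using that by auto
    have c: "k div 2 \<le> card (e \<inter> W)"
    proof (rule ccontr)
      assume "\<not> ?thesis"
      hence "good k v W E" by (intro good_local[OF _ g]) (auto simp: flip1)
      thus False using nf unfolding fam_def by blast
    qed
    have "e \<in> E"
    proof (rule ccontr)
      assume "e \<notin> E"
      hence "e \<in> flip E {e}" by (simp add: flip1)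
      thus False using g c that(2) unfolding good_def by blast
    qed
    thus ?thesis using c by auto
  qed
  have "card (?A - ?K) \<le> Suc 0"
  proof (subst card_le_Suc0_iff_eq, use fA in simp, intro ballI)
    fix e1 e2 assume e1: "e1 \<in> ?A - ?K" and e2: "e2 \<in> ?A - ?K"
    have ne1: "\<not> e1 \<subseteq> W" "\<not> e2 \<subseteq> W" using e1 e2 unfolding hedges_def by auto
    show "e1 = e2"
    proof (rule ccontr)
      assume ne: "e1 \<noteq> e2"
      have "e2 \<in> E" "k div 2 \<le> card (e2 \<inter> W)" using key e2 ne1 by auto
      hence "e2 \<in> flip E {e1}" using ne by (simp add: flip1)
      moreover have "good k v W (flip E {e1})" using e1 by auto
      ultimately show False using \<open>k div 2 \<le> card (e2 \<inter> W)\<close> ne1 unfolding good_def by blast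
    qed
  qed
  moreover have "card ?K = Suc k" using n_subsets[OF finW, of k] W by simp
  moreover have "card ?A \<le> card ?K + card (?A - ?K)"
  proof -
    have "?A \<subseteq> ?K \<union> (?A - ?K)" by blast
    hence "card ?A \<le> card (?K \<union> (?A - ?K))" by (rule card_mono[rotated]) (use finW fA in auto)
    also have "\<dots> \<le> card ?K + card (?A - ?K)" by (rule card_Un_le)
    finally show ?thesis .
  qed
  ultimately show ?thesis by linarith
qed

lemma two_elems:
  assumes "2 \<le> card A"
  obtains x y where "x \<in> A" "y \<in> A" "x \<noteq> y"
proof -
  obtain S where S: "S \<subseteq> A" "card S = 2" using assms obtain_subset_with_card_n by meson
  then obtain x y where "S = {x, y}" "x \<noteq> y" by (auto simp: card_2_iff)
  thus ?thesis using S that by blast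
qed

lemma two_X:
  assumes f1: "finite W1" and c1: "card W1 = Suc k" and c2: "card W2 = Suc k"
    and ne: "W1 \<noteq> W2" and t: "t \<le> card (W1 \<inter> W2)" and tk: "t < k" and k2: "2 \<le> k"
  shows "\<exists>y1 y2. y1 \<noteq> y2 \<and> y1 \<in> W2 \<and> y2 \<in> W2 \<and>
     (\<forall>y\<in>{y1,y2}. \<not> (W2 - {y} \<subseteq> W1) \<and> t \<le> card ((W2 - {y}) \<inter> W1))"
proof -
  have f2: "finite W2" using c2 card_ge_0_finite by force
  consider "card (W2 - W1) = 0" | "card (W2 - W1) = 1" | "2 \<le> card (W2 - W1)" by linarith
  thus ?thesis
  proof cases
    case 1
    hence "W2 \<subseteq> W1" using f2 by auto
    hence "W2 = W1" using f1 c1 c2 by (intro card_subset_eq) auto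
    thus ?thesis using ne by simp
  next
    case 2
    then obtain b where b: "W2 - W1 = {b}" using card_1_singletonE by blast
    have "card W2 = card (W2 \<inter> W1) + card (W2 - W1)" by (rule card_Int_Diff[OF f2])
    hence "card W2 = card (W2 - W1) + card (W1 \<inter> W2)" by (simp add: Int_commute)
    hence ck: "card (W1 \<inter> W2) = k" using 2 c2 by simp
    hence "2 \<le> card (W1 \<inter> W2)" using k2 by linarith
    then obtain y1 y2 where y: "y1 \<in> W1 \<inter> W2" "y2 \<in> W1 \<inter> W2" "y1 \<noteq> y2"
      by (rule two_elems)
    have "\<not> (W2 - {y} \<subseteq> W1) \<and> t \<le> card ((W2 - {y}) \<inter> W1)" if "y \<in> W1 \<inter> W2" for y
    proof
      show "\<not> (W2 - {y} \<subseteq> W1)" using b that by auto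
      have "(W2 - {y}) \<inter> W1 = (W1 \<inter> W2) - {y}" by auto
      hence "card ((W2 - {y}) \<inter> W1) = k - 1" using ck that f1 by (simp add: card_Diff_singleton)
      thus "t \<le> card ((W2 - {y}) \<inter> W1)" using tk by simp
    qed
    thus ?thesis using y by blast
  next
    case 3
    then obtain y1 y2 where y: "y1 \<in> W2 - W1" "y2 \<in> W2 - W1" "y1 \<noteq> y2"
      by (rule two_elems)
    have "\<not> (W2 - {y} \<subseteq> W1) \<and> t \<le> card ((W2 - {y}) \<inter> W1)" if "y \<in> {y1,y2}" for y
    proof
      show "\<not> (W2 - {y} \<subseteq> W1)" using y that by auto
      have "(W2 - {y}) \<inter> W1 = W1 \<inter> W2" using y that by auto
      thus "t \<le> card ((W2 - {y}) \<inter> W1)" using t by simp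
    qed
    thus ?thesis using y by blast
  qed
qed

lemma NG_disj:
  assumes k: "2 \<le> k" and g1: "good k v W1 (flip E {e1})" and g2: "good k v W2 (flip E {e2})"
    and ne: "W1 \<noteq> W2"
  shows "card (W1 \<inter> W2) < k div 2"
proof (rule ccontr)
  assume "\<not> ?thesis"
  hence t: "k div 2 \<le> card (W1 \<inter> W2)" by simp
  have c1: "card W1 = Suc k" and c2: "card W2 = Suc k" using g1 g2 unfolding good_def by auto
  have f1: "finite W1" and f2: "finite W2" using c1 c2 card_ge_0_finite by force+
  have tk: "k div 2 < k" using k by simp
  obtain y1 y2 where y: "y1 \<noteq> y2" "y1 \<in> W2" "y2 \<in> W2"
     "\<forall>y\<in>{y1,y2}. \<not> (W2 - {y} \<subseteq> W1) \<and> k div 2 \<le> card ((W2 - {y}) \<inter> W1)"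
    using two_X[OF f1 c1 c2 ne t tk k] by blast
  have t': "k div 2 \<le> card (W2 \<inter> W1)" using t by (simp add: Int_commute)
  obtain z where z: "z \<in> W1"
     "\<not> (W1 - {z} \<subseteq> W2) \<and> k div 2 \<le> card ((W1 - {z}) \<inter> W2)"
    using two_X[OF f2 c2 c1 ne[symmetric] t' tk k] by blast
  have X: "W2 - {y} \<in> {e1, e2}" if "y \<in> {y1,y2}" for y
  proof -
    have yW: "y \<in> W2" using that y by auto
    have "card (W2 - {y}) = k" using yW c2 f2 by simp
    hence in2: "W2 - {y} \<in> flip E {e2}" using good_ksub[OF g2] by blast
    have yy: "\<not> (W2 - {y} \<subseteq> W1)" "k div 2 \<le> card ((W2 - {y}) \<inter> W1)" using y(4) that by auto
    have "W2 - {y} \<notin> flip E {e1}" using good_viol[OF g1 _ yy(2)] yy(1) by blast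
    thus ?thesis using in2 unfolding flip1 by blast
  qed
  have Z: "W1 - {z} \<in> {e1, e2}"
  proof -
    have "card (W1 - {z}) = k" using z c1 f1 by simp
    hence in1: "W1 - {z} \<in> flip E {e1}" using good_ksub[OF g1] by blast
    have "W1 - {z} \<notin> flip E {e2}" using good_viol[OF g2 _] z by blast
    thus ?thesis using in1 unfolding flip1 by blast
  qed
  have x1: "W2 - {y1} \<in> {e1, e2}" and x2: "W2 - {y2} \<in> {e1, e2}" using X by auto
  have d12: "W2 - {y1} \<noteq> W2 - {y2}" using y by auto
  have dz1: "W1 - {z} \<noteq> W2 - {y1}" and dz2: "W1 - {z} \<noteq> W2 - {y2}" using y(4) z by auto
  show False
  proof -
    from x1 have "W2 - {y1} = e1 \<or> W2 - {y1} = e2" by simp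
    moreover from x2 have "W2 - {y2} = e1 \<or> W2 - {y2} = e2" by simp
    moreover from Z have "W1 - {z} = e1 \<or> W1 - {z} = e2" by simp
    ultimately show False using d12 dz1 dz2 by metis
  qed
qed

lemma sens_zero:
  assumes k: "2 \<le> k" and nf: "\<not> fam k v E"
  shows "card {e \<in> hedges k v. fam k v (flip E {e}) \<noteq> fam k v E} \<le> (k + 2) * (v choose (k div 2))"
proof -
  let ?t = "k div 2"
  define NG where "NG = {W. \<exists>e\<in>hedges k v. good k v W (flip E {e})}"
  define A where "A W = {e \<in> hedges k v. good k v W (flip E {e})}" for W
  have NGsub: "NG \<subseteq> Pow {0..<v}" unfolding NG_def good_def by auto
  have fNG: "finite NG" using NGsub finite_subset by blast
  have sub: "{e \<in> hedges k v. fam k v (flip E {e}) \<noteq> fam k v E} \<subseteq> (\<Union>W\<in>NG. A W)"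
  proof
    fix e assume "e \<in> {e \<in> hedges k v. fam k v (flip E {e}) \<noteq> fam k v E}"
    hence e: "e \<in> hedges k v" "fam k v (flip E {e})" using nf by auto
    then obtain W where W: "good k v W (flip E {e})" unfolding fam_def by blast
    hence "W \<in> NG" "e \<in> A W" using e(1) unfolding NG_def A_def by auto
    thus "e \<in> (\<Union>W\<in>NG. A W)" by blast
  qed
  have cW: "card W = Suc k" if "W \<in> NG" for W using that unfolding NG_def good_def by auto
  have "card {e \<in> hedges k v. fam k v (flip E {e}) \<noteq> fam k v E} \<le> card (\<Union>W\<in>NG. A W)"
    by (rule card_mono[OF finite_subset[OF _ finite_hedges] sub]) (unfold A_def, blast)
  also have "\<dots> \<le> (\<Sum>W\<in>NG. card (A W))" by (rule card_UN_le[OF fNG])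
  also have "\<dots> \<le> (\<Sum>W\<in>NG. k + 2)"
  proof (rule sum_mono)
    fix W assume "W \<in> NG"
    thus "card (A W) \<le> k + 2" unfolding A_def using A_bound[OF nf cW] by blast
  qed
  also have "\<dots> = (k + 2) * card NG" by simp
  also have "card NG \<le> v choose ?t"
  proof -
    define T :: "nat set \<Rightarrow> nat set" where "T W = (SOME T. T \<subseteq> W \<and> card T = ?t)" for W
    have T: "T W \<subseteq> W \<and> card (T W) = ?t" if "W \<in> NG" for W
    proof -
      have "?t \<le> card W" using cW[OF that] by simp
      hence "\<exists>T. T \<subseteq> W \<and> card T = ?t" by (meson obtain_subset_with_card_n)
      thus ?thesis unfolding T_def by (rule someI_ex)
    qed
    have "inj_on T NG"
    proof (rule inj_onI, rule ccontr)
      fix W1 W2 assume W: "W1 \<in> NG" "W2 \<in> NG" "T W1 = T W2" "W1 \<noteq> W2"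
      have "finite W1" using cW[OF W(1)] by (metis card_ge_0_finite zero_less_Suc)
      hence fi: "finite (W1 \<inter> W2)" by simp
      have "T W1 \<subseteq> W1 \<inter> W2" using T W by auto
      hence "?t \<le> card (W1 \<inter> W2)" using T[OF W(1)] card_mono[OF fi] by metis
      moreover obtain e1 e2 where g1: "good k v W1 (flip E {e1})" and g2: "good k v W2 (flip E {e2})"
        using W unfolding NG_def by auto
      ultimately show False using NG_disj[OF k g1 g2 W(4)] by linarith
    qed
    moreover have "T ` NG \<subseteq> {S. S \<subseteq> {0..<v} \<and> card S = ?t}"
    proof (rule image_subsetI)
      fix W assume W: "W \<in> NG"
      hence "W \<subseteq> {0..<v}" using NGsub by auto
      thus "T W \<in> {S. S \<subseteq> {0..<v} \<and> card S = ?t}" using T[OF W] by auto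
    qed
    ultimately have "card NG \<le> card {S. S \<subseteq> {0..<v} \<and> card S = ?t}"
      by (intro card_inj_on_le) auto
    thus ?thesis by (simp add: n_subsets)
  qed
  hence "(k + 2) * card NG \<le> (k + 2) * (v choose ?t)" by (rule mult_le_mono2)
  finally show ?thesis .
qed



lemma modl:
  assumes "(x::nat) < n" "y < n" "(a + x) mod n = (a + y) mod n" shows "x = y"
proof -
  have *: "x = y" if "y \<le> x" "x < n" "(a + x) mod n = (a + y) mod n" for x y :: nat
  proof -
    have "n dvd (a + x) - (a + y)" using that mod_eq_dvd_iff_nat[of "a + y" "a + x" n] by simp
    hence d: "n dvd x - y" by simp
    show "x = y"
    proof (rule ccontr)
      assume "x \<noteq> y" hence "0 < x - y" using that by simp
      hence "n \<le> x - y" using d dvd_imp_le by blast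
      thus False using that by simp
    qed
  qed
  show ?thesis
  proof (cases "y \<le> x")
    case True thus ?thesis using * assms by blast
  next
    case False thus ?thesis using *[of x y] assms by (metis nat_le_linear)
  qed
qed

lemma three_elems:
  assumes "3 \<le> card A"
  obtains x y z where "x \<in> A" "y \<in> A" "z \<in> A" "x \<noteq> y" "x \<noteq> z" "y \<noteq> z"
proof -
  obtain S where S: "S \<subseteq> A" "card S = 3" using assms obtain_subset_with_card_n by meson
  then obtain x y z where "S = {x, y, z}" "x \<noteq> y" "x \<noteq> z" "y \<noteq> z" by (auto simp: card_3_iff)
  thus ?thesis using S that by blast
qed

lemma hedges_card: "card (hedges k v) = v choose k"
  unfolding hedges_def by (simp add: n_subsets)

lemma finite_hinputs: "finite (hinputs k v)"
  unfolding hinputs_def using finite_hedges by simp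

lemma sens_upper:
  assumes k: "2 \<le> k"
  shows "sensitivity k v (fam k v) \<le>
     (Suc k choose (k div 2)) * (v choose (k - k div 2)) + (k + 2) * (v choose (k div 2))"
  unfolding sensitivity_def
proof (rule Max.boundedI)
  show "finite ((\<lambda>E. card {e \<in> hedges k v. fam k v (flip E {e}) \<noteq> fam k v E}) ` hinputs k v)"
    using finite_hinputs by simp
  show "(\<lambda>E. card {e \<in> hedges k v. fam k v (flip E {e}) \<noteq> fam k v E}) ` hinputs k v \<noteq> {}"
    unfolding hinputs_def by auto
next
  fix a assume "a \<in> (\<lambda>E. card {e \<in> hedges k v. fam k v (flip E {e}) \<noteq> fam k v E}) ` hinputs k v"
  then obtain E where a: "a = card {e \<in> hedges k v. fam k v (flip E {e}) \<noteq> fam k v E}" by blast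
  show "a \<le> (Suc k choose (k div 2)) * (v choose (k - k div 2)) + (k + 2) * (v choose (k div 2))"
  proof (cases "fam k v E")
    case True
    then obtain W where g: "good k v W E" unfolding fam_def by blast
    hence cW: "card W = Suc k" unfolding good_def by auto
    hence fW: "finite W" by (metis card_ge_0_finite zero_less_Suc)
    have "a \<le> card {e \<in> hedges k v. k div 2 \<le> card (e \<inter> W)}"
      unfolding a by (rule card_mono[OF _ sens_one[OF g]]) (use finite_hedges in simp)
    also have "\<dots> \<le> (Suc k choose (k div 2)) * (v choose (k - k div 2))"
      using card_N[OF fW, of k v "k div 2"] cW by simp
    finally show ?thesis by linarith
  next
    case False
    show ?thesis using sens_zero[OF k False] a by linarith
  qed
qed

lemma not_fam_ins:
  assumes W0: "card W0 = Suc k" and k: "2 \<le> k" and eW: "\<not> e \<subseteq> W0"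
    and ce: "k div 2 \<le> card (e \<inter> W0)"
  shows "\<not> fam k v (insert e {e. e \<subseteq> W0 \<and> card e = k})"
proof
  let ?E = "insert e {e. e \<subseteq> W0 \<and> card e = k}"
  assume "fam k v ?E"
  then obtain W where g: "good k v W ?E" unfolding fam_def by blast
  have cW: "card W = Suc k" using g unfolding good_def by auto
  have fW: "finite W" using cW by (metis card_ge_0_finite zero_less_Suc)
  have f0: "finite W0" using W0 by (metis card_ge_0_finite zero_less_Suc)
  show False
  proof (cases "W = W0")
    case True
    have "e \<subseteq> W" using good_viol[OF g, of e] ce True by simp
    thus False using eW True by simp
  next
    case False
    have "3 \<le> card W" using cW k by simp
    then obtain a b c where abc: "a \<in> W" "b \<in> W" "c \<in> W" "a \<noteq> b" "a \<noteq> c" "b \<noteq> c"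
      by (rule three_elems)
    have mem: "W - {x} = e \<or> W - {x} \<subseteq> W0" if "x \<in> W" for x
    proof -
      have "card (W - {x}) = k" using cW fW that by simp
      hence "W - {x} \<in> ?E" using good_ksub[OF g] by blast
      thus ?thesis by auto
    qed
    have two: "W \<subseteq> W0" if "x \<in> W" "y \<in> W" "x \<noteq> y" "W - {x} \<subseteq> W0" "W - {y} \<subseteq> W0" for x y
      using that by blast
    have dd: "W - {x} \<noteq> W - {y}" if "x \<in> W" "y \<in> W" "x \<noteq> y" for x y using that by blast
    have "W \<subseteq> W0"
      using mem[OF abc(1)] mem[OF abc(2)] mem[OF abc(3)] two[OF abc(1,2,4)] two[OF abc(1,3,5)]
        two[OF abc(2,3,6)] dd[OF abc(1,2,4)] dd[OF abc(1,3,5)] dd[OF abc(2,3,6)] by metis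
    hence "W = W0" using f0 cW W0 by (intro card_subset_eq) auto
    thus False using False by simp
  qed
qed

lemma sens_lower:
  assumes k: "2 \<le> k" and v: "Suc k \<le> v"
  shows "(v - Suc k) choose (k - k div 2) \<le> sensitivity k v (fam k v)"
proof -
  let ?t = "k div 2" and ?m = "k - k div 2"
  define W0 where "W0 = {0..<Suc k}"
  define E0 where "E0 = {e. e \<subseteq> W0 \<and> card e = k}"
  define T0 where "T0 = {0..<?t}"
  define Rs where "Rs = {R. R \<subseteq> {Suc k..<v} \<and> card R = ?m}"
  have cW0: "card W0 = Suc k" unfolding W0_def by simp
  have E0in: "E0 \<in> hinputs k v" unfolding hinputs_def hedges_def E0_def W0_def using v by auto
  have famE0: "fam k v E0" unfolding fam_def
  proof
    show "good k v W0 E0" unfolding good_def E0_def W0_def using v by auto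
  qed
  have m1: "1 \<le> ?m" using k by simp
  have sens: "T0 \<union> R \<in> {e \<in> hedges k v. fam k v (flip E0 {e}) \<noteq> fam k v E0}" if R: "R \<in> Rs" for R
  proof -
    let ?e = "T0 \<union> R"
    have Rs': "R \<subseteq> {Suc k..<v}" "card R = ?m" using R unfolding Rs_def by auto
    have fR: "finite R" using Rs'(1) finite_subset by blast
    have "k div 2 \<le> k" by simp
    hence dis: "T0 \<inter> R = {}" using Rs'(1) unfolding T0_def by (auto simp: subset_iff)
    have ce: "card ?e = k" using card_Un_disjoint[OF _ fR dis] Rs'(2) unfolding T0_def by simp
    have esub: "?e \<subseteq> {0..<v}" using Rs'(1) v unfolding T0_def by auto
    have hed: "?e \<in> hedges k v" using ce esub unfolding hedges_def by simp
    obtain r where r: "r \<in> R" using Rs'(2) m1 by (metis card.empty ex_in_conv not_one_le_zero)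
    have "Suc k \<le> r" using r Rs'(1) by auto
    hence neW: "\<not> ?e \<subseteq> W0" using r unfolding W0_def by auto
    have "T0 \<subseteq> ?e \<inter> W0" unfolding T0_def W0_def by auto
    hence ct: "?t \<le> card (?e \<inter> W0)" using card_mono[of "?e \<inter> W0" T0] unfolding T0_def W0_def by simp
    have "?e \<notin> E0" using neW unfolding E0_def by auto
    hence fl: "flip E0 {?e} = insert ?e E0" unfolding flip_def by auto
    have "\<not> fam k v (flip E0 {?e})" unfolding fl unfolding E0_def
      by (rule not_fam_ins[OF cW0 k neW ct])
    thus ?thesis using famE0 hed by auto
  qed
  have "inj_on (\<lambda>R. T0 \<union> R) Rs"
  proof (rule inj_onI)
    fix R1 R2 assume "R1 \<in> Rs" "R2 \<in> Rs" "T0 \<union> R1 = T0 \<union> R2"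
    moreover have "T0 \<inter> R1 = {}" "T0 \<inter> R2 = {}" using \<open>R1 \<in> Rs\<close> \<open>R2 \<in> Rs\<close>
      unfolding Rs_def T0_def using div_le_dividend[of k 2] by (auto simp: subset_iff)
    ultimately show "R1 = R2" by blast
  qed
  hence "card Rs \<le> card {e \<in> hedges k v. fam k v (flip E0 {e}) \<noteq> fam k v E0}"
    by (rule card_inj_on_le) (use sens finite_hedges in auto)
  also have "\<dots> \<le> sensitivity k v (fam k v)"
    unfolding sensitivity_def by (rule Max_ge) (use finite_hinputs E0in in auto)
  finally show ?thesis unfolding Rs_def by (simp add: n_subsets)
qed



lemma flip_empty: "flip E {} = E" unfolding flip_def by auto

lemma bs_set_bound:
  assumes "\<B> \<subseteq> Pow (hedges k v)" "pairwise disjnt \<B>" "\<forall>B\<in>\<B>. f (flip E B) \<noteq> f E"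
  shows "card \<B> \<le> v choose k"
proof -
  have ne: "B \<noteq> {}" if "B \<in> \<B>" for B using assms(3) that flip_empty by metis
  define c where "c B = (SOME x. x \<in> B)" for B :: "nat set set"
  have c: "c B \<in> B" if "B \<in> \<B>" for B unfolding c_def using ne[OF that] by (simp add: some_in_eq)
  have "inj_on c \<B>"
  proof (rule inj_onI, rule ccontr)
    fix B1 B2 assume B: "B1 \<in> \<B>" "B2 \<in> \<B>" "c B1 = c B2" "B1 \<noteq> B2"
    hence "disjnt B1 B2" using assms(2) unfolding pairwise_def by blast
    thus False using c[OF B(1)] c[OF B(2)] B(3) unfolding disjnt_def by auto
  qed
  moreover have "c ` \<B> \<subseteq> hedges k v" using c assms(1) by blast
  ultimately have "card \<B> \<le> card (hedges k v)" by (rule card_inj_on_le) (rule finite_hedges)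
  thus ?thesis by (simp add: hedges_card)
qed

definition bsS where "bsS k v f = {card \<B> | E \<B>. E \<in> hinputs k v \<and> \<B> \<subseteq> Pow (hedges k v) \<and>
            pairwise disjnt \<B> \<and> (\<forall>B\<in>\<B>. f (flip E B) \<noteq> f E)}"

lemma bs_finite: "finite (bsS k v f)"
proof -
  have "bsS k v f \<subseteq> {..v choose k}"
  proof
    fix x assume "x \<in> bsS k v f"
    then obtain E B where B: "x = card B" "B \<subseteq> Pow (hedges k v)" "pairwise disjnt B"
        "\<forall>b\<in>B. f (flip E b) \<noteq> f E" unfolding bsS_def by blast
    show "x \<in> {..v choose k}" using bs_set_bound[OF B(2,3,4)] B(1) by simp
  qed
  thus "finite (bsS k v f)" using finite_subset by blast
qed

lemma bs_ne: "bsS k v f \<noteq> {}"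
proof -
  have "{} \<in> hinputs k v" unfolding hinputs_def by simp
  hence "card {} \<in> bsS k v f" unfolding bsS_def
    by (intro CollectI exI[of _ "{}"]) auto
  thus ?thesis by blast
qed

lemma bs_def': "block_sensitivity k v f = Max (bsS k v f)"
  unfolding block_sensitivity_def bsS_def by simp

lemma bs_upper: "block_sensitivity k v f \<le> v choose k"
  unfolding bs_def'
proof (rule Max.boundedI[OF bs_finite bs_ne])
  fix x assume "x \<in> bsS k v f"
  then obtain E B where B: "x = card B" "B \<subseteq> Pow (hedges k v)" "pairwise disjnt B"
      "\<forall>b\<in>B. f (flip E b) \<noteq> f E" unfolding bsS_def by blast
  show "x \<le> v choose k" using bs_set_bound[OF B(2,3,4)] B(1) by simp
qed

lemma disj_lemma:
  fixes n :: nat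
  defines "Wf \<equiv> \<lambda>S. insert (n + (\<Sum>S) mod n) S"
  assumes S1: "S1 \<subseteq> {0..<n}" "card S1 = k" and S2: "S2 \<subseteq> {0..<n}" "card S2 = k"
    and ne: "S1 \<noteq> S2" and e1: "e \<subseteq> Wf S1" and e2: "e \<subseteq> Wf S2" and ce: "card e = k"
  shows False
proof -
  let ?g1 = "n + (\<Sum>S1) mod n" and ?g2 = "n + (\<Sum>S2) mod n"
  have f1: "finite S1" and f2: "finite S2" using S1 S2 finite_subset by blast+
  have fe: "finite e" using e1 f1 unfolding Wf_def by (meson finite_insert finite_subset)
  have lt1: "x < n" if "x \<in> S1" for x using S1 that by auto
  have lt2: "x < n" if "x \<in> S2" for x using S2 that by auto
  show False
  proof (cases "?g1 \<in> e")
    case False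
    hence "e \<subseteq> S1" using e1 unfolding Wf_def by auto
    hence eS1: "e = S1" using f1 ce S1(2) card_subset_eq by metis
    hence "?g2 \<notin> e" using lt1 by force
    hence "e \<subseteq> S2" using e2 unfolding Wf_def by auto
    hence "e = S2" using f2 ce S2(2) card_subset_eq by metis
    thus False using eS1 ne by simp
  next
    case True
    hence "?g1 \<in> Wf S2" using e2 by auto
    moreover have "?g1 \<notin> S2" using lt2 by force
    ultimately have g12: "?g1 = ?g2" unfolding Wf_def by simp
    define e' where "e' = e - {?g1}"
    have e'1: "e' \<subseteq> S1" using e1 unfolding e'_def Wf_def by auto
    have e'2: "e' \<subseteq> S2" using e2 g12 unfolding e'_def Wf_def by auto
    have fe': "finite e'" using e'1 f1 finite_subset by blast
    have "e \<noteq> {}" using True by auto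
    hence "0 < card e" using fe by (simp add: card_gt_0_iff)
    hence k1: "1 \<le> k" using ce by simp
    have ce': "card e' = k - 1" using True fe ce unfolding e'_def by simp
    have "card (S1 - e') = card S1 - card e'" by (rule card_Diff_subset[OF fe' e'1])
    hence "card (S1 - e') = 1" using ce' S1(2) k1 by simp
    then obtain x where x: "S1 - e' = {x}" using card_1_singletonE by blast
    have "card (S2 - e') = card S2 - card e'" by (rule card_Diff_subset[OF fe' e'2])
    hence "card (S2 - e') = 1" using ce' S2(2) k1 by simp
    then obtain y where y: "S2 - e' = {y}" using card_1_singletonE by blast
    have S1e: "S1 = insert x e'" "x \<notin> e'" using x e'1 by auto
    have S2e: "S2 = insert y e'" "y \<notin> e'" using y e'2 by auto
    have "\<Sum>S1 = \<Sum>e' + x" using S1e fe' by simp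
    moreover have "\<Sum>S2 = \<Sum>e' + y" using S2e fe' by simp
    ultimately have "(\<Sum>e' + x) mod n = (\<Sum>e' + y) mod n" using g12 by simp
    moreover have "x < n" "y < n" using lt1 lt2 S1e S2e by auto
    ultimately have "x = y" using modl by blast
    thus False using S1e S2e ne by simp
  qed
qed



lemma bs_lower:
  assumes k: "2 \<le> k"
  shows "(v div 2) choose k \<le> block_sensitivity k v (fam k v)"
proof -
  define n where "n = v div 2"
  define Wf where "Wf = (\<lambda>S. insert (n + (\<Sum>S) mod n) S)"
  define Bf where "Bf = (\<lambda>S. {e. e \<subseteq> Wf S \<and> card e = k})"
  define Sk where "Sk = {S. S \<subseteq> {0..<n} \<and> card S = k}"
  have n2: "2 * n \<le> v" unfolding n_def by simp
  have SkD: "S \<subseteq> {0..<n}" "card S = k" "finite S" if "S \<in> Sk" for S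
    using that finite_subset unfolding Sk_def by auto
  have npos: "0 < n" if "S \<in> Sk" for S
  proof (rule ccontr)
    assume "\<not> 0 < n" hence "S = {}" using SkD[OF that] by auto
    thus False using SkD[OF that] k by simp
  qed
  have gnot: "n + (\<Sum>S) mod n \<notin> S" if "S \<in> Sk" for S using SkD[OF that] by auto
  have cW: "card (Wf S) = Suc k" if "S \<in> Sk" for S
    unfolding Wf_def using gnot[OF that] SkD[OF that] by simp
  have Wv: "Wf S \<subseteq> {0..<v}" if "S \<in> Sk" for S
  proof -
    have "(\<Sum>S) mod n < n" using npos[OF that] by simp
    thus ?thesis unfolding Wf_def using SkD[OF that] n2 by auto
  qed
  have good: "good k v (Wf S) (Bf S)" if "S \<in> Sk" for S
    unfolding good_def Bf_def using cW[OF that] Wv[OF that] by auto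
  have nf0: "\<not> fam k v {}"
  proof
    assume "fam k v {}"
    then obtain W where g: "good k v W {}" unfolding fam_def by blast
    hence "k \<le> card W" unfolding good_def by simp
    then obtain e where "e \<subseteq> W" "card e = k" by (meson obtain_subset_with_card_n)
    thus False using good_ksub[OF g] by blast
  qed
  have sens: "fam k v (flip {} (Bf S)) \<noteq> fam k v {}" if "S \<in> Sk" for S
  proof -
    have "flip {} (Bf S) = Bf S" unfolding flip_def by simp
    thus ?thesis using good[OF that] nf0 unfolding fam_def by auto
  qed
  have disj: "Bf S1 \<inter> Bf S2 = {}" if "S1 \<in> Sk" "S2 \<in> Sk" "S1 \<noteq> S2" for S1 S2
  proof (rule ccontr)
    assume "Bf S1 \<inter> Bf S2 \<noteq> {}"
    then obtain e where "e \<subseteq> Wf S1" "e \<subseteq> Wf S2" "card e = k" unfolding Bf_def by blast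
    thus False using disj_lemma[of S1 n k S2 e] SkD[OF that(1)] SkD[OF that(2)] that(3)
      unfolding Wf_def by blast
  qed
  have inS: "S \<in> Bf S" if "S \<in> Sk" for S unfolding Bf_def Wf_def using SkD[OF that] by auto
  have inj: "inj_on Bf Sk"
  proof (rule inj_onI, rule ccontr)
    fix S1 S2 assume "S1 \<in> Sk" "S2 \<in> Sk" "Bf S1 = Bf S2" "S1 \<noteq> S2"
    thus False using disj[of S1 S2] inS[of S1] by auto
  qed
  have B1: "Bf ` Sk \<subseteq> Pow (hedges k v)"
    unfolding hedges_def Bf_def using Wv by blast
  have B2: "pairwise disjnt (Bf ` Sk)"
    unfolding pairwise_def disjnt_def using disj by blast
  have B3: "\<forall>B\<in>Bf ` Sk. fam k v (flip {} B) \<noteq> fam k v {}" using sens by blast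
  have "card (Bf ` Sk) \<in> bsS k v (fam k v)"
    unfolding bsS_def using B1 B2 B3 hinputs_def by blast
  hence "card (Bf ` Sk) \<le> block_sensitivity k v (fam k v)"
    unfolding bs_def' using bs_finite by (rule Max_ge[rotated])
  moreover have "card (Bf ` Sk) = n choose k" using card_image[OF inj] unfolding Sk_def
    by (simp add: n_subsets)
  ultimately show ?thesis unfolding n_def by simp
qed



lemma choose_le_pow: "n choose r \<le> n ^ r"
proof (cases "r \<le> n")
  case True thus ?thesis by (rule binomial_le_pow)
next
  case False thus ?thesis by (simp add: binomial_eq_0)
qed

lemma s_up:
  assumes k: "2 \<le> k" and v: "1 \<le> v"
  shows "real (sensitivity k v (fam k v)) \<le> real ((Suc k choose (k div 2)) + k + 2) * real v ^ ((k + 1) div 2)"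
proof -
  let ?m = "(k + 1) div 2" and ?t = "k div 2"
  have km: "k - k div 2 = ?m" by simp
  have "v choose ?t \<le> v ^ ?t" by (rule choose_le_pow)
  also have "\<dots> \<le> v ^ ?m" using v by (intro power_increasing) auto
  finally have a: "v choose ?t \<le> v ^ ?m" .
  have b: "v choose ?m \<le> v ^ ?m" by (rule choose_le_pow)
  have "sensitivity k v (fam k v) \<le> (Suc k choose ?t) * (v choose ?m) + (k + 2) * (v choose ?t)"
    using sens_upper[OF k, of v] km by simp
  also have "\<dots> \<le> (Suc k choose ?t) * v ^ ?m + (k + 2) * v ^ ?m"
    using a b by (intro add_mono mult_le_mono2) auto
  also have "\<dots> = ((Suc k choose ?t) + k + 2) * v ^ ?m" by (simp add: algebra_simps)
  finally have "sensitivity k v (fam k v) \<le> ((Suc k choose ?t) + k + 2) * v ^ ?m" .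
  hence "real (sensitivity k v (fam k v)) \<le> real (((Suc k choose ?t) + k + 2) * v ^ ?m)"
    by (simp only: of_nat_le_iff)
  thus ?thesis by (simp only: of_nat_mult of_nat_power)
qed

lemma s_low:
  assumes k: "2 \<le> k" and v: "2 * Suc k \<le> v"
  shows "(1 / (2 * real ((k + 1) div 2))) ^ ((k + 1) div 2) * real v ^ ((k + 1) div 2)
           \<le> real (sensitivity k v (fam k v))"
proof -
  let ?m = "(k + 1) div 2"
  have km: "k - k div 2 = ?m" by simp
  have m1: "1 \<le> ?m" using k by simp
  have mk: "?m \<le> k" by simp
  have le: "?m \<le> v - Suc k" using v mk by simp
  have "(1 / (2 * real ?m)) ^ ?m * real v ^ ?m = (real v / (2 * real ?m)) ^ ?m"
    by (simp add: power_divide power_mult_distrib)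
  also have "\<dots> \<le> (real (v - Suc k) / real ?m) ^ ?m"
  proof (rule power_mono)
    have "real v \<le> 2 * real (v - Suc k)" using v by (simp add: of_nat_diff)
    thus "real v / (2 * real ?m) \<le> real (v - Suc k) / real ?m" using m1
      by (simp add: divide_simps)
    show "0 \<le> real v / (2 * real ?m)" by simp
  qed
  also have "\<dots> \<le> real ((v - Suc k) choose ?m)" by (rule binomial_ge_n_over_k_pow_k[OF le])
  also have "\<dots> \<le> real (sensitivity k v (fam k v))"
    using sens_lower[OF k] v km by simp
  finally show ?thesis .
qed

lemma bs_low:
  assumes k: "2 \<le> k" and v: "4 * k \<le> v"
  shows "(1 / (4 * real k)) ^ k * real v ^ k \<le> real (block_sensitivity k v (fam k v))"
proof -
  have le: "k \<le> v div 2" using v by simp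
  have "(1 / (4 * real k)) ^ k * real v ^ k = (real v / (4 * real k)) ^ k"
    by (simp add: power_divide power_mult_distrib)
  also have "\<dots> \<le> (real (v div 2) / real k) ^ k"
  proof (rule power_mono)
    have "v = 2 * (v div 2) + v mod 2" by simp
    moreover have "v mod 2 \<le> 1" by simp
    ultimately have "v \<le> 4 * (v div 2)" using v k by linarith
    hence "real v \<le> 4 * real (v div 2)" by (metis of_nat_le_iff of_nat_mult of_nat_numeral)
    thus "real v / (4 * real k) \<le> real (v div 2) / real k" using k
      by (simp add: divide_simps)
    show "0 \<le> real v / (4 * real k)" by simp
  qed
  also have "\<dots> \<le> real ((v div 2) choose k)" by (rule binomial_ge_n_over_k_pow_k[OF le])
  also have "\<dots> \<le> real (block_sensitivity k v (fam k v))"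
    using bs_lower[OF k] by simp
  finally show ?thesis .
qed

lemma bs_up: "real (block_sensitivity k v (fam k v)) \<le> 1 * real v ^ k"
proof -
  have "block_sensitivity k v (fam k v) \<le> v ^ k" using bs_upper choose_le_pow order.trans by blast
  hence "real (block_sensitivity k v (fam k v)) \<le> real (v ^ k)" by (simp only: of_nat_le_iff)
  thus ?thesis by simp
qed

theorem corollary4p5:
  fixes k :: nat
  assumes "k \<ge> 2"
  shows "\<exists>f :: nat \<Rightarrow> nat set set \<Rightarrow> bool.
     (\<forall>v. hyper_property k v (f v)) \<and>
     (\<lambda>v. real (sensitivity k v (f v))) \<in> \<Theta>(\<lambda>v. real v ^ ((k + 1) div 2)) \<and>
     (\<lambda>v. real (block_sensitivity k v (f v))) \<in> \<Theta>(\<lambda>v. real v ^ k) \<and>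
     (even k \<longrightarrow>
       (\<lambda>v. real (block_sensitivity k v (f v))) \<in> \<Theta>(\<lambda>v. real (sensitivity k v (f v)) ^ 2))"
proof (intro exI[of _ "fam k"] conjI allI impI)
  fix v show "hyper_property k v (fam k v)" by (rule hp)
next
  let ?m = "(k + 1) div 2"
  have m1: "1 \<le> ?m" using assms by simp
  show S: "(\<lambda>v. real (sensitivity k v (fam k v))) \<in> \<Theta>(\<lambda>v. real v ^ ?m)"
  proof (rule bigthetaI')
    show "0 < (1 / (2 * real ?m)) ^ ?m" using m1 by simp
    show "0 < real ((Suc k choose (k div 2)) + k + 2)" by simp
    have "eventually (\<lambda>v. 2 * Suc k \<le> v) at_top" by (rule eventually_ge_at_top)
    thus "eventually (\<lambda>v. (1 / (2 * real ?m)) ^ ?m * norm (real v ^ ?m) \<le> norm (real (sensitivity k v (fam k v))) \<and>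
       norm (real (sensitivity k v (fam k v))) \<le> real ((Suc k choose (k div 2)) + k + 2) * norm (real v ^ ?m)) at_top"
    proof (rule eventually_mono)
      fix v :: nat assume v: "2 * Suc k \<le> v"
      hence "1 \<le> v" by simp
      thus "(1 / (2 * real ?m)) ^ ?m * norm (real v ^ ?m) \<le> norm (real (sensitivity k v (fam k v))) \<and>
       norm (real (sensitivity k v (fam k v))) \<le> real ((Suc k choose (k div 2)) + k + 2) * norm (real v ^ ?m)"
        using s_low[OF assms v] s_up[OF assms] by simp
    qed
  qed
  show B: "(\<lambda>v. real (block_sensitivity k v (fam k v))) \<in> \<Theta>(\<lambda>v. real v ^ k)"
  proof (rule bigthetaI')
    show "0 < (1 / (4 * real k)) ^ k" using assms by simp
    show "(0::real) < 1" by simp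
    have "eventually (\<lambda>v. 4 * k \<le> v) at_top" by (rule eventually_ge_at_top)
    thus "eventually (\<lambda>v. (1 / (4 * real k)) ^ k * norm (real v ^ k) \<le> norm (real (block_sensitivity k v (fam k v))) \<and>
       norm (real (block_sensitivity k v (fam k v))) \<le> 1 * norm (real v ^ k)) at_top"
    proof (rule eventually_mono)
      fix v :: nat assume v: "4 * k \<le> v"
      thus "(1 / (4 * real k)) ^ k * norm (real v ^ k) \<le> norm (real (block_sensitivity k v (fam k v))) \<and>
       norm (real (block_sensitivity k v (fam k v))) \<le> 1 * norm (real v ^ k)"
        using bs_low[OF assms v] bs_up[of k v] by simp
    qed
  qed
  assume ev: "even k"
  have "(\<lambda>v. real (sensitivity k v (fam k v)) * real (sensitivity k v (fam k v)))
      \<in> \<Theta>(\<lambda>v. real v ^ ?m * real v ^ ?m)"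
    by (rule landau_theta.mult[OF S S])
  moreover have "(\<lambda>v. real v ^ ?m * real v ^ ?m) = (\<lambda>v::nat. real v ^ k)"
  proof -
    have "?m + ?m = k" using ev by auto
    thus ?thesis by (simp add: power_add[symmetric])
  qed
  ultimately have S2: "(\<lambda>v. real (sensitivity k v (fam k v)) ^ 2) \<in> \<Theta>(\<lambda>v. real v ^ k)"
    by (simp add: power2_eq_square)
  show "(\<lambda>v. real (block_sensitivity k v (fam k v))) \<in> \<Theta>(\<lambda>v. real (sensitivity k v (fam k v)) ^ 2)"
    by (rule landau_theta.bigtheta_trans1'[OF B S2])
qed

end
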